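(* Let $G$ and $H$ be finite graphs such that $\Delta(G)<n(H)$ and $\gamma(H)=1$. Then $\Gamma_{\rm S}(G,H)=\gamma_{\rm S}(G,H)=n(G)$.
   Context: All graphs are finite and simple; $\Delta(G)$ is the maximum degree of $G$, $n(X)=|V(X)|$, and $\gamma(X)$ is the domination number. For graphs $G,H$ and a function $f\colon V(G)\to V(H)$, the Sierpiński product $G\otimes_f H$ is the graph with vertex set $V(G)\times V(H)$ and edges of two types: (type 1) $(g,h)(g,h')$ for every $g\in V(G)$ and every edge $hh'\in E(H)$; (type 2) $(g,f(g'))(g',f(g))$ for every edge $gg'\in E(G)$. $\gamma_{\rm S}(G,H)=\min_{f}\gamma(G\otimes_f H)$ and $\Gamma_{\rm S}(G,H)=\max_{f}\gamma(G\otimes_f H)$, over all functions $f\colon V(G)\to V(H)$. *)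

theory Defs
  imports Main
begin

definition fin_graph :: "'a set \<Rightarrow> ('a \<Rightarrow> 'a \<Rightarrow> bool) \<Rightarrow> bool" where
  "fin_graph V E \<longleftrightarrow> finite V \<and> (\<forall>x y. E x y \<longrightarrow> x \<in> V \<and> y \<in> V)
     \<and> (\<forall>x y. E x y \<longrightarrow> E y x) \<and> (\<forall>x. \<not> E x x)"

definition degree :: "'a set \<Rightarrow> ('a \<Rightarrow> 'a \<Rightarrow> bool) \<Rightarrow> 'a \<Rightarrow> nat" where
  "degree V E x = card {y \<in> V. E x y}"

definition max_degree :: "'a set \<Rightarrow> ('a \<Rightarrow> 'a \<Rightarrow> bool) \<Rightarrow> nat" where
  "max_degree V E = Max (insert 0 (degree V E ` V))"

definition dominating :: "'a set \<Rightarrow> ('a \<Rightarrow> 'a \<Rightarrow> bool) \<Rightarrow> 'a set \<Rightarrow> bool" where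
  "dominating V E D \<longleftrightarrow> D \<subseteq> V \<and> (\<forall>v\<in>V. v \<in> D \<or> (\<exists>u\<in>D. E u v))"

definition domination_number :: "'a set \<Rightarrow> ('a \<Rightarrow> 'a \<Rightarrow> bool) \<Rightarrow> nat" where
  "domination_number V E = Min {card D | D. dominating V E D}"

definition sierp_adj :: "('a \<Rightarrow> 'a \<Rightarrow> bool) \<Rightarrow> ('b \<Rightarrow> 'b \<Rightarrow> bool) \<Rightarrow> ('a \<Rightarrow> 'b)
    \<Rightarrow> 'a \<times> 'b \<Rightarrow> 'a \<times> 'b \<Rightarrow> bool" where
  "sierp_adj EG EH f p q \<longleftrightarrow>
     (fst p = fst q \<and> EH (snd p) (snd q))
   \<or> (EG (fst p) (fst q) \<and> snd p = f (fst q) \<and> snd q = f (fst p))"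

definition sierp_dom :: "'a set \<Rightarrow> ('a \<Rightarrow> 'a \<Rightarrow> bool) \<Rightarrow> 'b set \<Rightarrow> ('b \<Rightarrow> 'b \<Rightarrow> bool)
    \<Rightarrow> ('a \<Rightarrow> 'b) \<Rightarrow> nat" where
  "sierp_dom VG EG VH EH f = domination_number (VG \<times> VH) (sierp_adj EG EH f)"

definition gamma_S :: "'a set \<Rightarrow> ('a \<Rightarrow> 'a \<Rightarrow> bool) \<Rightarrow> 'b set \<Rightarrow> ('b \<Rightarrow> 'b \<Rightarrow> bool) \<Rightarrow> nat" where
  "gamma_S VG EG VH EH = Min {sierp_dom VG EG VH EH f | f. \<forall>g\<in>VG. f g \<in> VH}"

definition Gamma_S :: "'a set \<Rightarrow> ('a \<Rightarrow> 'a \<Rightarrow> bool) \<Rightarrow> 'b set \<Rightarrow> ('b \<Rightarrow> 'b \<Rightarrow> bool) \<Rightarrow> nat" where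
  "Gamma_S VG EG VH EH = Max {sierp_dom VG EG VH EH f | f. \<forall>g\<in>VG. f g \<in> VH}"

end

theory Submission
  imports Defs
begin

lemma key:
  fixes VG :: "'a set" and EG :: "'a \<Rightarrow> 'a \<Rightarrow> bool"
    and VH :: "'b set" and EH :: "'b \<Rightarrow> 'b \<Rightarrow> bool"
  assumes G: "fin_graph VG EG" and H: "fin_graph VH EH"
    and md: "max_degree VG EG < card VH"
    and h0: "h0 \<in> VH" "\<forall>v\<in>VH. v = h0 \<or> EH h0 v"
    and f: "\<forall>g\<in>VG. f g \<in> VH"
  shows "sierp_dom VG EG VH EH f = card VG"
proof -
  have fVG: "finite VG" using G by (simp add: fin_graph_def)
  have fVH: "finite VH" using H by (simp add: fin_graph_def)
  let ?S = "{card D | D. dominating (VG \<times> VH) (sierp_adj EG EH f) D}"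
  have fin: "finite ?S"
  proof -
    have "?S \<subseteq> card ` Pow (VG \<times> VH)" by (auto simp: dominating_def)
    moreover have "finite (card ` Pow (VG \<times> VH))" using fVG fVH by simp
    ultimately show ?thesis by (rule finite_subset)
  qed
  have mem: "card VG \<in> ?S"
  proof -
    have "dominating (VG \<times> VH) (sierp_adj EG EH f) (VG \<times> {h0})"
      using h0 by (auto simp: dominating_def sierp_adj_def)
    moreover have "card (VG \<times> {h0}) = card VG" by (simp add: card_cartesian_product)
    ultimately show ?thesis unfolding mem_Collect_eq by (intro exI[of _ "VG \<times> {h0}"]) simp
  qed
  have lb: "card VG \<le> c" if "c \<in> ?S" for c
  proof -
    obtain D where D: "dominating (VG \<times> VH) (sierp_adj EG EH f) D" "c = card D"
      using \<open>c \<in> ?S\<close> by auto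
    have fD: "finite D" proof (rule finite_subset)
      show "D \<subseteq> VG \<times> VH" using D by (simp add: dominating_def)
    qed (use fVG fVH in simp)
    have "VG \<subseteq> fst ` D"
    proof
      fix g assume g: "g \<in> VG"
      let ?N = "{g' \<in> VG. EG g g'}"
      have "card (f ` ?N) \<le> card ?N" using fVG by (simp add: card_image_le)
      also have "\<dots> = degree VG EG g" by (simp add: degree_def)
      also have "\<dots> \<le> max_degree VG EG" unfolding max_degree_def
        using g fVG by (intro Max_ge) auto
      finally have "card (f ` ?N) < card VH" using md by simp
      moreover have "finite (f ` ?N)" using fVG by simp
      ultimately have "\<not> VH \<subseteq> f ` ?N"
        by (metis card_mono leD)
      then obtain h where h: "h \<in> VH" "h \<notin> f ` ?N" by blast
      have "(g,h) \<in> D \<or> (\<exists>u\<in>D. sierp_adj EG EH f u (g,h))"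
        using D(1) g h(1) by (auto simp: dominating_def)
      thus "g \<in> fst ` D"
      proof
        assume "(g,h) \<in> D" thus ?thesis by force
      next
        assume "\<exists>u\<in>D. sierp_adj EG EH f u (g,h)"
        then obtain u where u: "u \<in> D" "sierp_adj EG EH f u (g,h)" by blast
        show ?thesis
        proof (cases "fst u = g")
          case True thus ?thesis using u by force
        next
          case False
          hence "EG (fst u) g" "h = f (fst u)" using u by (auto simp: sierp_adj_def)
          moreover have "fst u \<in> VG" using u D(1) by (auto simp: dominating_def)
          moreover have "EG g (fst u)" using G \<open>EG (fst u) g\<close> by (simp add: fin_graph_def)
          ultimately have "h \<in> f ` ?N" by auto
          thus ?thesis using h by blast
        qed
      qed
    qed
    hence "card VG \<le> card (fst ` D)" using fD by (simp add: card_mono)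
    also have "\<dots> \<le> card D" using fD by (rule card_image_le)
    finally show ?thesis using D by simp
  qed
  show ?thesis unfolding sierp_dom_def domination_number_def
    using fin mem lb by (intro Min_eqI) auto
qed

theorem proposition2p3:
  fixes VG :: "'a set" and EG :: "'a \<Rightarrow> 'a \<Rightarrow> bool"
    and VH :: "'b set" and EH :: "'b \<Rightarrow> 'b \<Rightarrow> bool"
  assumes "fin_graph VG EG" and "fin_graph VH EH"
    and "max_degree VG EG < card VH"
    and "domination_number VH EH = 1"
  shows "Gamma_S VG EG VH EH = card VG \<and> gamma_S VG EG VH EH = card VG"
proof -
  have "1 \<in> {card D | D. dominating VH EH D}"
  proof -
    have fVH: "finite VH" using assms(2) by (simp add: fin_graph_def)
    have fin: "finite {card D | D. dominating VH EH D}"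
    proof -
      have "{card D | D. dominating VH EH D} \<subseteq> card ` Pow VH" by (auto simp: dominating_def)
      moreover have "finite (card ` Pow VH)" using fVH by simp
      ultimately show ?thesis by (rule finite_subset)
    qed
    have ne: "{card D | D. dominating VH EH D} \<noteq> {}"
    proof -
      have "dominating VH EH VH" by (simp add: dominating_def)
      thus ?thesis by blast
    qed
    show ?thesis using Min_in[OF fin ne] assms(4) by (simp add: domination_number_def)
  qed
  then obtain D where D: "dominating VH EH D" "card D = 1" by auto
  then obtain h0 where "D = {h0}" by (auto simp: card_Suc_eq)
  hence h0: "h0 \<in> VH" "\<forall>v\<in>VH. v = h0 \<or> EH h0 v" using D(1) by (auto simp: dominating_def)
  have eq: "{sierp_dom VG EG VH EH f | f. \<forall>g\<in>VG. f g \<in> VH} = {card VG}"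
  proof
    show "{sierp_dom VG EG VH EH f | f. \<forall>g\<in>VG. f g \<in> VH} \<subseteq> {card VG}"
      using key[OF assms(1-3) h0] by auto
    have "sierp_dom VG EG VH EH (\<lambda>_. h0) = card VG" using key[OF assms(1-3) h0, of "\<lambda>_. h0"] h0 by simp
    thus "{card VG} \<subseteq> {sierp_dom VG EG VH EH f | f. \<forall>g\<in>VG. f g \<in> VH}" using h0
      by (auto intro!: exI[of _ "\<lambda>_. h0"])
  qed
  show ?thesis unfolding Gamma_S_def gamma_S_def eq by simp
qed

end
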